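(* Let $\beta_1=\frac{p_1}{q_1}>1$ and $\beta_2=\frac{p_2}{q_2}>1$ with $\gcd(p_1,q_1)=\gcd(p_2,q_2)=1$, and suppose $p_1\neq kq_2$ for every $k\in\mathbb{N}$. Write $\frac{p_1}{q_2}=\frac{p}{z}$ with $\gcd(p,z)=1$ (so $z>1$). Then for every $n\ge 1$ there are integers $t_n$ and $m_n\ge 1$ such that $T_{\beta_1\circ\beta_2}^n(1)=\frac{t_n}{m_n z^n}$ and $\gcd(t_n,z)=1$. Consequently the set $O_{T_{\beta_1\circ\beta_2}}(1)$ is infinite.
   Context: For a real number $\gamma>1$ let $T_\gamma:[0,1)\to[0,1)$, $T_\gamma(x)=\gamma x \bmod 1$, and $T_{\beta_1\circ\beta_2}:=T_{\beta_1}\circ T_{\beta_2}$. The value at $1$ is defined as the left limit, $T_{\beta_1\circ\beta_2}(1):=\lim_{x\nearrow1}T_{\beta_1\circ\beta_2}(x)$ (equivalently $T_{\beta_2}(1):=1$ and $T_{\beta_1}(1):=\lim_{x\nearrow 1}T_{\beta_1}(x)$), and $T^n_{\beta_1\circ\beta_2}(1):=T^{n-1}_{\beta_1\circ\beta_2}(T_{\beta_1\circ\beta_2}(1))$ for $n\ge2$. The orbit set is $O_{T_{\beta_1\circ\beta_2}}(1):=\{T^k_{\beta_1\circ\beta_2}(1):k\ge1\}$. *)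

theory Defs
  imports Complex_Main
begin

definition beta_map :: "real \<Rightarrow> real \<Rightarrow> real" where
  "beta_map \<gamma> x = \<gamma> * x - of_int \<lfloor>\<gamma> * x\<rfloor>"

definition comp_map :: "real \<Rightarrow> real \<Rightarrow> real \<Rightarrow> real" where
  "comp_map \<beta>1 \<beta>2 x = beta_map \<beta>1 (beta_map \<beta>2 x)"

definition comp_map_at_one :: "real \<Rightarrow> real \<Rightarrow> real" where
  "comp_map_at_one \<beta>1 \<beta>2 = Lim (at_left 1) (comp_map \<beta>1 \<beta>2)"

definition comp_orbit :: "real \<Rightarrow> real \<Rightarrow> nat \<Rightarrow> real" where
  "comp_orbit \<beta>1 \<beta>2 n = (comp_map \<beta>1 \<beta>2 ^^ (n - 1)) (comp_map_at_one \<beta>1 \<beta>2)"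

definition orbit_set :: "real \<Rightarrow> real \<Rightarrow> real set" where
  "orbit_set \<beta>1 \<beta>2 = {comp_orbit \<beta>1 \<beta>2 k | k. k \<ge> 1}"

end

theory Submission
  imports Defs
begin

lemma lim_one:
  fixes b1 b2 :: real
  assumes "b1 > 0" "b2 > 0"
  shows "comp_map_at_one b1 b2 = b1 * (b2 * 1 - of_int (ceiling b2 - 1)) - of_int (ceiling (b1 * (b2 - of_int (ceiling b2 - 1))) - 1)"
proof -
  define c0 where "c0 = ceiling b2 - 1"
  define y0 where "y0 = b2 - of_int c0"
  define c1 where "c1 = ceiling (b1 * y0) - 1"
  have c0a: "of_int c0 < b2" "b2 \<le> of_int c0 + 1" unfolding c0_def by linarith+
  have y0: "0 < y0" "y0 \<le> 1" using c0a unfolding y0_def by auto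
  have c1a: "of_int c1 < b1 * y0" "b1 * y0 \<le> of_int c1 + 1" unfolding c1_def by linarith+
  have c1p: "c1 \<ge> 0" using c1a y0 assms unfolding c1_def
    by (smt (verit, ccfv_SIG) mult_pos_pos zero_less_ceiling)
  define d where "d = (of_int c1 / b1 + of_int c0) / b2"
  have d1: "d < 1" unfolding d_def using c1a assms y0_def
    by (simp add: field_simps)
  have "eventually (\<lambda>x. x \<in> {d<..<1}) (at_left (1::real))"
    using d1 eventually_at_left_real by blast
  hence ev: "eventually (\<lambda>x. comp_map b1 b2 x = b1 * (b2 * x - of_int c0) - of_int c1) (at_left 1)"
  proof (rule eventually_mono)
    fix x :: real assume x: "x \<in> {d<..<1}"
    have "b2 * x > of_int c1 / b1 + of_int c0" using x assms unfolding d_def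
      by (simp add: field_simps)
    moreover have "of_int c1 / b1 \<ge> 0" using c1p assms by simp
    ultimately have l0: "b2 * x > of_int c0" by linarith
    have "b2 * x < b2" using x assms by simp
    hence u0: "b2 * x < of_int c0 + 1" using c0a by linarith
    have f0: "floor (b2 * x) = c0" using l0 u0 by linarith
    have "b1 * (b2 * x - of_int c0) > of_int c1"
      using \<open>b2 * x > of_int c1 / b1 + of_int c0\<close> assms by (simp add: field_simps)
    moreover have "b1 * (b2 * x - of_int c0) < b1 * y0"
      using x assms unfolding y0_def
      by (simp add: mult_less_cancel_left2)
    ultimately have f1: "floor (b1 * (b2 * x - of_int c0)) = c1" using c1a by linarith
    show "comp_map b1 b2 x = b1 * (b2 * x - of_int c0) - of_int c1"
      unfolding comp_map_def beta_map_def using f0 f1 by simp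
  qed
  have "((\<lambda>x. b1 * (b2 * x - of_int c0) - of_int c1) \<longlongrightarrow> b1 * (b2 * 1 - of_int c0) - of_int c1) (at_left 1)"
    by (intro tendsto_intros)
  hence "(comp_map b1 b2 \<longlongrightarrow> b1 * (b2 * 1 - of_int c0) - of_int c1) (at_left 1)"
    using tendsto_cong[OF ev] by simp
  hence "comp_map_at_one b1 b2 = b1 * (b2 * 1 - of_int c0) - of_int c1"
    unfolding comp_map_at_one_def by (intro tendsto_Lim) auto
  thus ?thesis unfolding c1_def y0_def c0_def by simp
qed

lemma coprime_shift:
  fixes A K z :: int
  assumes "coprime A z"
  shows "coprime (A + K * z) z"
proof -
  have "gcd z (K * z + A) = gcd z A" by (rule gcd_add_mult)
  thus ?thesis using assms by (simp add: coprime_iff_gcd_eq_1 gcd.commute add.commute)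
qed

lemma step:
  fixes p1 q1 p2 q2 p z :: nat and t a b :: int and n :: nat
  assumes "q1 > 0" "q2 > 0" "z > 0" "real p1 * real z = real p * real q2"
    "coprime p z" "coprime p2 z" "coprime t (int z)"
  shows "\<exists>t'. coprime t' (int z) \<and> (real p1 / real q1) * ((real p2 / real q2) * (of_int t / (real q1 ^ n * real z ^ n)) - of_int a) - of_int b = of_int t' / (real q1 ^ Suc n * real z ^ Suc n)"
proof -
  define K where "K = - ((int p1 * a + b * int q1) * int q1 ^ n * int z ^ n)"
  define t' where "t' = int p * int p2 * t + K * int z"
  have "coprime (int p * int p2 * t) (int z)" using assms by simp
  hence c: "coprime t' (int z)" unfolding t'_def by (rule coprime_shift)
  have p1e: "real p1 = real p * real q2 / real z" using assms by (simp add: field_simps)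
  have "(real p1 / real q1) * ((real p2 / real q2) * (of_int t / (real q1 ^ n * real z ^ n)) - of_int a) - of_int b = of_int t' / (real q1 ^ Suc n * real z ^ Suc n)"
    unfolding t'_def K_def using assms
    by (simp add: field_simps)
  thus ?thesis using c by blast
qed

lemma no_coinc:
  fixes t t' :: int and q1 z n k :: nat
  assumes "q1 > 0" "z > 1" "n < k" "coprime t' (int z)"
    "of_int t / (real q1 ^ n * real z ^ n) = of_int t' / (real q1 ^ k * real z ^ k)"
  shows False
proof -
  obtain d where d: "k = n + Suc d" using assms(3) less_iff_Suc_add by auto
  have A: "real q1 ^ n * real z ^ n \<noteq> 0" and B: "real q1 ^ k * real z ^ k \<noteq> 0" using assms(1,2) by auto
  have "of_int t * (real q1 ^ k * real z ^ k) = of_int t' * (real q1 ^ n * real z ^ n)"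
    using assms(5) frac_eq_eq[OF A B] by simp
  hence "real_of_int (t * (int q1 ^ k * int z ^ k)) = real_of_int (t' * (int q1 ^ n * int z ^ n))"
    by simp
  hence e: "t * (int q1 ^ k * int z ^ k) = t' * (int q1 ^ n * int z ^ n)"
    by (simp only: of_int_eq_iff)
  have "int q1 ^ k * int z ^ k = (int q1 ^ Suc d * int z ^ Suc d) * (int q1 ^ n * int z ^ n)"
    unfolding d power_add by (simp only: mult_ac)
  hence "(t * (int q1 ^ Suc d * int z ^ Suc d)) * (int q1 ^ n * int z ^ n) = t' * (int q1 ^ n * int z ^ n)"
    using e by (simp only: mult.assoc)
  moreover have "int q1 ^ n * int z ^ n \<noteq> 0" using assms(1,2) by simp
  ultimately have "t * (int q1 ^ Suc d * int z ^ Suc d) = t'"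
    using mult_right_cancel by blast
  hence "int z dvd t'" by (metis dvd_mult dvd_mult2 dvd_refl power_Suc)
  hence "is_unit (int z)" using assms(4) by (meson coprime_common_divisor dvd_refl)
  thus False using assms(2) by simp
qed

theorem lemma4p1:
  fixes p1 q1 p2 q2 p z :: nat
  assumes "q1 > 0" and "q2 > 0"
    and "real p1 / real q1 > 1" and "real p2 / real q2 > 1"
    and "coprime p1 q1" and "coprime p2 q2"
    and "\<forall>k::nat. p1 \<noteq> k * q2"
    and "real p1 / real q2 = real p / real z" and "coprime p z"
  shows "(\<forall>n\<ge>1. \<exists>t m :: int. m \<ge> 1 \<and>
            comp_orbit (real p1 / real q1) (real p2 / real q2) n = of_int t / (of_int m * real z ^ n) \<and>
            coprime t (int z))
         \<and> infinite (orbit_set (real p1 / real q1) (real p2 / real q2))"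
proof -
  define b1 where "b1 = real p1 / real q1"
  define b2 where "b2 = real p2 / real q2"
  have b1: "b1 > 0" and b2: "b2 > 0" using assms(3,4) unfolding b1_def b2_def by auto
  have p1pos: "p1 > 0" using assms(1,3) by (cases "p1 = 0") auto
  have z0: "z \<noteq> 0"
  proof
    assume "z = 0"
    hence "real p1 / real q2 = 0" using assms(8) by simp
    thus False using p1pos assms(2) by simp
  qed
  have eqr: "real p1 * real z = real p * real q2" using assms(2,8) z0 by (simp add: field_simps)
  hence eqn: "p1 * z = p * q2" by (metis of_nat_eq_iff of_nat_mult)
  have z1: "z \<noteq> 1"
  proof
    assume "z = 1"
    hence "p1 = p * q2" using eqn by simp
    thus False using assms(7) by blast
  qed
  have zg: "z > 1" using z0 z1 by linarith
  have "z dvd p * q2" using eqn by (metis dvd_triv_right)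
  hence "z dvd q2" using assms(9) by (metis coprime_commute coprime_dvd_mult_right_iff)
  hence cp2: "coprime p2 z" using assms(6) by (meson coprime_commute coprime_imp_coprime dvd_trans)
  have T1: "comp_map_at_one b1 b2 = b1 * (b2 * 1 - of_int (ceiling b2 - 1)) - of_int (ceiling (b1 * (b2 - of_int (ceiling b2 - 1))) - 1)"
    by (rule lim_one[OF b1 b2])
  have orb: "\<exists>t. coprime t (int z) \<and> (comp_map b1 b2 ^^ k) (comp_map_at_one b1 b2) = of_int t / (real q1 ^ Suc k * real z ^ Suc k)" for k
  proof (induction k)
    case 0
    have "\<exists>t'. coprime t' (int z) \<and> b1 * (b2 * (of_int 1 / (real q1 ^ 0 * real z ^ 0)) - of_int (ceiling b2 - 1)) - of_int (ceiling (b1 * (b2 - of_int (ceiling b2 - 1))) - 1) = of_int t' / (real q1 ^ Suc 0 * real z ^ Suc 0)"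
      unfolding b1_def b2_def
      by (rule step[OF assms(1,2) _ eqr assms(9) cp2]) (use z0 in auto)
    then show ?case using T1 by simp
  next
    case (Suc k)
    then obtain t where t: "coprime t (int z)" "(comp_map b1 b2 ^^ k) (comp_map_at_one b1 b2) = of_int t / (real q1 ^ Suc k * real z ^ Suc k)" by blast
    define x where "x = of_int t / (real q1 ^ Suc k * real z ^ Suc k)"
    have "\<exists>t'. coprime t' (int z) \<and> b1 * (b2 * (of_int t / (real q1 ^ Suc k * real z ^ Suc k)) - of_int (floor (b2 * x))) - of_int (floor (b1 * (b2 * x - of_int (floor (b2 * x))))) = of_int t' / (real q1 ^ Suc (Suc k) * real z ^ Suc (Suc k))"
      unfolding b1_def b2_def
      by (rule step[OF assms(1,2) _ eqr assms(9) cp2 t(1)]) (use z0 in auto)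
    then show ?case using t(2) unfolding x_def comp_map_def beta_map_def by simp
  qed
  have part1: "\<exists>t m :: int. m \<ge> 1 \<and> comp_orbit b1 b2 n = of_int t / (of_int m * real z ^ n) \<and> coprime t (int z)"
    if "n \<ge> 1" for n
  proof -
    obtain t where t: "coprime t (int z)" "(comp_map b1 b2 ^^ (n - 1)) (comp_map_at_one b1 b2) = of_int t / (real q1 ^ Suc (n - 1) * real z ^ Suc (n - 1))"
      using orb by blast
    have "Suc (n - 1) = n" using that by simp
    hence "comp_orbit b1 b2 n = of_int t / (of_int (int q1 ^ n) * real z ^ n)"
      using t(2) unfolding comp_orbit_def by simp
    moreover have "int q1 ^ n \<ge> 1" using assms(1) by simp
    ultimately show ?thesis using t(1) by blast
  qed
  have form: "\<exists>t. coprime t (int z) \<and> comp_orbit b1 b2 n = of_int t / (real q1 ^ n * real z ^ n)"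
    if "n \<ge> 1" for n
  proof -
    obtain t where t: "coprime t (int z)" "(comp_map b1 b2 ^^ (n - 1)) (comp_map_at_one b1 b2) = of_int t / (real q1 ^ Suc (n - 1) * real z ^ Suc (n - 1))"
      using orb by blast
    have "Suc (n - 1) = n" using that by simp
    thus ?thesis using t unfolding comp_orbit_def by auto
  qed
  have inj: "inj_on (comp_orbit b1 b2) {1..}"
  proof (rule inj_onI)
    fix n k assume n: "n \<in> {1..}" and k: "k \<in> {1..}" and e: "comp_orbit b1 b2 n = comp_orbit b1 b2 k"
    obtain t where t: "coprime t (int z)" "comp_orbit b1 b2 n = of_int t / (real q1 ^ n * real z ^ n)"
      using form n by auto
    obtain t' where t': "coprime t' (int z)" "comp_orbit b1 b2 k = of_int t' / (real q1 ^ k * real z ^ k)"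
      using form k by auto
    show "n = k"
    proof (rule ccontr)
      assume "n \<noteq> k"
      then consider "n < k" | "k < n" by linarith
      thus False
      proof cases
        case 1 thus False using no_coinc[OF assms(1) zg 1 t'(1)] e t(2) t'(2) by simp
      next
        case 2
        have "of_int t' / (real q1 ^ k * real z ^ k) = of_int t / (real q1 ^ n * real z ^ n)"
          using e t(2) t'(2) by simp
        thus False using no_coinc[OF assms(1) zg 2 t(1)] by blast
      qed
    qed
  qed
  have "orbit_set b1 b2 = comp_orbit b1 b2 ` {1..}" unfolding orbit_set_def by auto
  moreover have "infinite {1::nat..}" by (simp add: infinite_Ici)
  ultimately have "infinite (orbit_set b1 b2)" using inj finite_imageD by metis
  thus ?thesis using part1 unfolding b1_def b2_def by blast
qed

end
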